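(* Let $\bar{\mathcal S}=\{f:\exists\,h,z\text{ with }((f,h),z)\in\mathcal S\}$ and $\bar{\mathcal Q}=\{f:\exists\,w\text{ with }(f,w)\in\mathcal Q\}$. Then $\bar{\mathcal S}=\bar{\mathcal Q}$; consequently, minimizing any linear function $\Lambda f^T$ over $\mathcal S$ is equivalent to minimizing it over $\mathcal Q$.
   Context: Let $R$ be a finite ring with $q$ elements, $R^-=R\setminus\{0\}$, $\mathcal H$ an $m\times n$ matrix over $R$, $\mathcal I=\{1,\dots,n\}$, $\mathcal J=\{1,\dots,m\}$. For any $r\times N$ matrix $\mathcal A$ over $R$ with rows indexed by $\rho$, let $\mathcal C_\rho(\mathcal A)=\{g\in R^{\mathrm{supp}(\mathcal A_\rho)}:\sum_ig_i\mathcal A_{\rho,i}=0\}$ and let $\mathcal Q(\mathcal A)$ be the set of $(F,W)$, $F=(F_i^{(\alpha)})_{i\le N,\alpha\in R^-}$ real, $W=(W_{\rho,g})_{\rho,g\in\mathcal C_\rho(\mathcal A)}$ real, with $W_{\rho,g}\ge0$, $\sum_gW_{\rho,g}=1$ for each $\rho$, and $F_i^{(\alpha)}=\sum_{g\in\mathcal C_\rho(\mathcal A),g_i=\alpha}W_{\rho,g}$ for all $\rho$, $i\in\mathrm{supp}(\mathcal A_\rho)$, $\alpha\in R^-$. Let $\mathcal Q=\mathcal Q(\mathcal H)$, with points written $(f,w)$, $f\in\mathbb R^{(q-1)n}$. For each $j\in\mathcal J$ let $\mathcal I_j=\{i:\mathcal H_{j,i}\ne0\}=\{i_1,\dots,i_{d_j}\}$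 in a fixed order, with $d_j\ge4$, and introduce new variables $\chi^j_1,\dots,\chi^j_{d_j-3}$. Let $\mathcal F$ be the $\big(\sum_j(d_j-2)\big)\times\big(n+\sum_j(d_j-3)\big)$ matrix over $R$, acting on vectors $(c\mid\chi)$ with $c\in R^n$ and $\chi=(\chi^j)_{j\in\mathcal J}$, whose rows express, for every $j\in\mathcal J$, the equations $c_{i_1}\mathcal H_{j,i_1}+c_{i_2}\mathcal H_{j,i_2}+\chi^j_1=0$; $-\chi^j_\ell+c_{i_{\ell+2}}\mathcal H_{j,i_{\ell+2}}+\chi^j_{\ell+1}=0$ for $\ell=1,\dots,d_j-4$; $-\chi^j_{d_j-3}+c_{i_{d_j-1}}\mathcal H_{j,i_{d_j-1}}+c_{i_{d_j}}\mathcal H_{j,i_{d_j}}=0$. Let $\mathcal S=\mathcal Q(\mathcal F)$, with points written $((f,h),z)$ where $f\in\mathbb R^{(q-1)n}$ collects the $F$-coordinates for the $c$-positions and $h$ those for the $\chi$-positions. *)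

theory Defs
  imports Complex_Main
begin

text \<open>A matrix A over a ring is a function row => column => 'r, together with an
explicit (finite) set of rows and columns.  Vectors g in R^supp(A_rho) are
represented as functions that vanish outside supp(A_rho).\<close>

definition row_supp :: "('row \<Rightarrow> 'col \<Rightarrow> 'r::ring_1) \<Rightarrow> 'col set \<Rightarrow> 'row \<Rightarrow> 'col set" where
  "row_supp A Cols \<rho> = {i \<in> Cols. A \<rho> i \<noteq> 0}"

definition local_code :: "('row \<Rightarrow> 'col \<Rightarrow> 'r::ring_1) \<Rightarrow> 'col set \<Rightarrow> 'row \<Rightarrow> ('col \<Rightarrow> 'r) set" where
  "local_code A Cols \<rho> =
     {g. (\<forall>i. i \<notin> row_supp A Cols \<rho> \<longrightarrow> g i = 0) \<and>
         (\<Sum>i\<in>row_supp A Cols \<rho>. g i * A \<rho> i) = 0}"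

text \<open>The polytope Q(A): pairs (F,W); coordinates outside the index ranges are fixed to 0.\<close>
definition polytopeQ ::
  "('row \<Rightarrow> 'col \<Rightarrow> 'r::ring_1) \<Rightarrow> 'row set \<Rightarrow> 'col set \<Rightarrow>
   (('col \<Rightarrow> 'r \<Rightarrow> real) \<times> ('row \<Rightarrow> ('col \<Rightarrow> 'r) \<Rightarrow> real)) set" where
  "polytopeQ A Rows Cols =
    {(F, W).
       (\<forall>i \<alpha>. (i \<notin> Cols \<or> \<alpha> = 0) \<longrightarrow> F i \<alpha> = 0) \<and>
       (\<forall>\<rho> g. (\<rho> \<notin> Rows \<or> g \<notin> local_code A Cols \<rho>) \<longrightarrow> W \<rho> g = 0) \<and>
       (\<forall>\<rho>\<in>Rows. (\<forall>g\<in>local_code A Cols \<rho>. W \<rho> g \<ge> 0) \<and>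
                   (\<Sum>g\<in>local_code A Cols \<rho>. W \<rho> g) = 1) \<and>
       (\<forall>\<rho>\<in>Rows. \<forall>i\<in>row_supp A Cols \<rho>. \<forall>\<alpha>. \<alpha> \<noteq> 0 \<longrightarrow>
          F i \<alpha> = (\<Sum>g\<in>{g \<in> local_code A Cols \<rho>. g i = \<alpha>}. W \<rho> g))}"

definition Iset :: "(nat \<Rightarrow> nat \<Rightarrow> 'r::ring_1) \<Rightarrow> nat \<Rightarrow> nat \<Rightarrow> nat set" where
  "Iset H n j = {i \<in> {1..n}. H j i \<noteq> 0}"

definition deg :: "(nat \<Rightarrow> nat \<Rightarrow> 'r::ring_1) \<Rightarrow> nat \<Rightarrow> nat \<Rightarrow> nat" where
  "deg H n j = card (Iset H n j)"

text \<open>Columns: Inl i is c_i (i in 1..n), Inr (j,l) is chi^j_l (l in 1..d_j-3).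
  Rows: (j,k), k in 1..d_j-2, the k-th equation of check j.
  pos j k = i_k, the k-th element of I_j in the chosen order.\<close>
definition F_rows :: "(nat \<Rightarrow> nat \<Rightarrow> 'r::ring_1) \<Rightarrow> nat \<Rightarrow> nat \<Rightarrow> (nat \<times> nat) set" where
  "F_rows H m n = {(j, k). j \<in> {1..m} \<and> k \<in> {1..deg H n j - 2}}"

definition F_cols :: "(nat \<Rightarrow> nat \<Rightarrow> 'r::ring_1) \<Rightarrow> nat \<Rightarrow> nat \<Rightarrow> (nat + nat \<times> nat) set" where
  "F_cols H m n = Inl ` {1..n} \<union> {Inr (j, l) | j l. j \<in> {1..m} \<and> l \<in> {1..deg H n j - 3}}"

definition F_cpos :: "(nat \<Rightarrow> nat \<Rightarrow> 'r::ring_1) \<Rightarrow> nat \<Rightarrow> (nat \<Rightarrow> nat \<Rightarrow> nat) \<Rightarrow> nat \<Rightarrow> nat \<Rightarrow> nat set" where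
  "F_cpos H n pos j k =
     (if k = 1 then {pos j 1, pos j 2}
      else if k = deg H n j - 2 then {pos j (deg H n j - 1), pos j (deg H n j)}
      else {pos j (k + 1)})"

definition F_mat :: "(nat \<Rightarrow> nat \<Rightarrow> 'r::ring_1) \<Rightarrow> nat \<Rightarrow> nat \<Rightarrow> (nat \<Rightarrow> nat \<Rightarrow> nat) \<Rightarrow>
                     nat \<times> nat \<Rightarrow> nat + nat \<times> nat \<Rightarrow> 'r" where
  "F_mat H m n pos = (\<lambda>(j, k) col.
     if (j, k) \<notin> F_rows H m n then 0 else
     (case col of
        Inl i \<Rightarrow> (if i \<in> F_cpos H n pos j k then H j i else 0)
      | Inr (j', l) \<Rightarrow>
          (if j' \<noteq> j then 0
           else if l = k \<and> k \<le> deg H n j - 3 then 1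
           else if k \<ge> 2 \<and> l = k - 1 then -1
           else 0)))"

end

theory Submission
  imports Defs "HOL-Library.FuncSet"
begin


lemma finite_vanish:
  assumes "finite S"
  shows "finite {g :: 'a \<Rightarrow> 'r::{zero,finite}. \<forall>x. x \<notin> S \<longrightarrow> g x = 0}"
proof -
  have "{g :: 'a \<Rightarrow> 'r. \<forall>x. x \<notin> S \<longrightarrow> g x = 0} =
        {g. \<forall>x. (x \<in> S \<longrightarrow> g x \<in> UNIV) \<and> (x \<notin> S \<longrightarrow> g x = 0)}" by auto
  then show ?thesis using finite_set_of_finite_funs[OF assms, of "UNIV::'r set" 0] by simp
qed

lemma fiber_sum:
  fixes w :: "'a \<Rightarrow> real"
  assumes "finite A" "finite B" "r ` A \<subseteq> B"
  shows "(\<Sum>b\<in>{b\<in>B. P b}. \<Sum>a\<in>{a\<in>A. r a = b}. w a) = (\<Sum>a\<in>{a\<in>A. P (r a)}. w a)"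
proof -
  have "(\<Sum>b\<in>{b\<in>B. P b}. \<Sum>a\<in>{a\<in>A. r a = b}. w a)
      = (\<Sum>b\<in>{b\<in>B. P b}. \<Sum>a\<in>{a\<in>{a\<in>A. P (r a)}. r a = b}. w a)"
    apply (rule sum.cong[OF refl]) apply (rule sum.cong) by auto
  also have "\<dots> = (\<Sum>a\<in>{a\<in>A. P (r a)}. w a)"
    by (rule sum.group) (use assms in auto)
  finally show ?thesis .
qed

lemma zero_marg:
  fixes \<nu> :: "'b \<Rightarrow> real" and \<phi> :: "'b \<Rightarrow> 'r::{zero,finite}"
  assumes "finite B" "sum \<nu> B = 1"
  shows "(\<Sum>b\<in>{b\<in>B. \<phi> b = 0}. \<nu> b) = 1 - (\<Sum>a\<in>UNIV-{0}. \<Sum>b\<in>{b\<in>B. \<phi> b = a}. \<nu> b)"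
proof -
  have "sum \<nu> B = (\<Sum>a\<in>UNIV. \<Sum>b\<in>{b\<in>B. \<phi> b = a}. \<nu> b)"
    by (rule sum.group[symmetric]) (use assms in auto)
  also have "\<dots> = (\<Sum>b\<in>{b\<in>B. \<phi> b = 0}. \<nu> b) + (\<Sum>a\<in>UNIV-{0}. \<Sum>b\<in>{b\<in>B. \<phi> b = a}. \<nu> b)"
    by (subst sum.remove[of _ 0]) auto
  finally show ?thesis using assms by simp
qed

definition chainT :: "(nat \<Rightarrow> 'b set) \<Rightarrow> (nat \<Rightarrow> 'b \<Rightarrow> 'x) \<Rightarrow> (nat \<Rightarrow> 'b \<Rightarrow> 'x) \<Rightarrow> nat \<Rightarrow> (nat \<Rightarrow> 'b) set" where
  "chainT B L R K = {s. (\<forall>k. (k \<in> {1..K} \<longrightarrow> s k \<in> B k) \<and> (k \<notin> {1..K} \<longrightarrow> s k = undefined)) \<and>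
      (\<forall>k. 1 \<le> k \<longrightarrow> k < K \<longrightarrow> R k (s k) = L (Suc k) (s (Suc k)))}"

lemma chainT_finite:
  assumes "\<forall>k. finite (B k)"
  shows "finite (chainT B L R K)"
proof -
  have "chainT B L R K \<subseteq> PiE {1..K} B" unfolding chainT_def PiE_def extensional_def by auto
  moreover have "finite (PiE {1..K} B)" using assms by (intro finite_PiE) auto
  ultimately show ?thesis by (rule finite_subset)
qed

lemma chainT_Suc_sum:
  fixes G :: "(nat \<Rightarrow> 'b) \<Rightarrow> real"
  assumes fin: "\<forall>k. finite (B k)"
  shows "(\<Sum>s'\<in>chainT B L R (Suc K). G s') =
     (\<Sum>s\<in>chainT B L R K. \<Sum>b\<in>{b\<in>B (Suc K). K = 0 \<or> R K (s K) = L (Suc K) b}. G (s(Suc K := b)))"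
proof -
  let ?T = "chainT B L R K" and ?T' = "chainT B L R (Suc K)"
  let ?S = "Sigma ?T (\<lambda>s. {b\<in>B (Suc K). K = 0 \<or> R K (s K) = L (Suc K) b})"
  have "(\<Sum>s\<in>?T. \<Sum>b\<in>{b\<in>B (Suc K). K = 0 \<or> R K (s K) = L (Suc K) b}. G (s(Suc K := b)))
      = (\<Sum>(s,b)\<in>?S. G (s(Suc K := b)))"
    by (rule sum.Sigma) (use chainT_finite[OF fin] fin in auto)
  also have "\<dots> = (\<Sum>s'\<in>?T'. G s')"
  proof -
    have bij: "bij_betw (\<lambda>(s,b). s(Suc K := b)) ?S ?T'"
    proof (rule bij_betwI[where g="\<lambda>s'. (s'(Suc K := undefined), s' (Suc K))"])
      show "(\<lambda>(s,b). s(Suc K := b)) \<in> ?S \<rightarrow> ?T'"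
        unfolding chainT_def by (auto simp: le_Suc_eq less_Suc_eq)
      show "(\<lambda>s'. (s'(Suc K := undefined), s' (Suc K))) \<in> ?T' \<rightarrow> ?S"
      proof
        fix s' assume s': "s' \<in> ?T'"
        have a: "s' k \<in> B k" if "k \<in> {1..Suc K}" for k using s' that unfolding chainT_def by blast
        have b: "s' k = undefined" if "k \<notin> {1..Suc K}" for k using s' that unfolding chainT_def by blast
        have c: "R k (s' k) = L (Suc k) (s' (Suc k))" if "1 \<le> k" "k < Suc K" for k using s' that unfolding chainT_def by blast
        have "s'(Suc K := undefined) \<in> ?T" unfolding chainT_def using a b c by auto
        moreover have "s' (Suc K) \<in> B (Suc K)" using a by auto
        moreover have "K = 0 \<or> R K (s' K) = L (Suc K) (s' (Suc K))" using c[of K] by (cases K) auto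
        ultimately show "(s'(Suc K := undefined), s' (Suc K)) \<in> ?S" by auto
      qed
      show "\<And>p. p \<in> ?S \<Longrightarrow> (\<lambda>s'. (s'(Suc K := undefined), s' (Suc K))) (case p of (s,b) \<Rightarrow> s(Suc K := b)) = p"
        unfolding chainT_def by auto
      show "\<And>s'. s' \<in> ?T' \<Longrightarrow> (case (s'(Suc K := undefined), s' (Suc K)) of (s,b) \<Rightarrow> s(Suc K := b)) = s'"
        by auto
    qed
    show ?thesis using sum.reindex_bij_betw[OF bij, of G] by (simp add: case_prod_beta)
  qed
  finally show ?thesis by simp
qed

lemma chainT_Suc_mem:
  assumes s': "s' \<in> chainT B L R (Suc K)"
  shows "s'(Suc K := undefined) \<in> chainT B L R K" "s' (Suc K) \<in> B (Suc K)"
    "K = 0 \<or> R K (s' K) = L (Suc K) (s' (Suc K))"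
proof -
  have a: "s' k \<in> B k" if "k \<in> {1..Suc K}" for k using s' that unfolding chainT_def by blast
  have b: "s' k = undefined" if "k \<notin> {1..Suc K}" for k using s' that unfolding chainT_def by blast
  have c: "R k (s' k) = L (Suc k) (s' (Suc k))" if "1 \<le> k" "k < Suc K" for k using s' that unfolding chainT_def by blast
  show "s'(Suc K := undefined) \<in> chainT B L R K" unfolding chainT_def using a b c by auto
  show "s' (Suc K) \<in> B (Suc K)" using a by auto
  show "K = 0 \<or> R K (s' K) = L (Suc K) (s' (Suc K))" using c[of K] by (cases K) auto
qed

lemma chainT_undef: "s \<in> chainT B L R K \<Longrightarrow> s (Suc K) = undefined"
  unfolding chainT_def by auto

lemma sum_ind: "finite A \<Longrightarrow> (\<Sum>a\<in>A. f a * (if P a then 1 else 0)) = (\<Sum>a\<in>{a\<in>A. P a}. (f a::real))"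
  by (auto simp: sum.inter_filter intro!: sum.cong)

lemma chain_glue:
  fixes B :: "nat \<Rightarrow> 'b set" and \<nu> :: "nat \<Rightarrow> 'b \<Rightarrow> real" and L R :: "nat \<Rightarrow> 'b \<Rightarrow> 'x"
  assumes fin: "\<forall>k. finite (B k)"
    and nn: "\<forall>k\<in>{1..N}. \<forall>b\<in>B k. \<nu> k b \<ge> 0"
    and one: "\<forall>k\<in>{1..N}. sum (\<nu> k) (B k) = 1"
    and cons: "\<forall>k. 1 \<le> k \<longrightarrow> k < N \<longrightarrow> (\<forall>x. (\<Sum>b\<in>{b\<in>B k. R k b = x}. \<nu> k b) = (\<Sum>b\<in>{b\<in>B (Suc k). L (Suc k) b = x}. \<nu> (Suc k) b))"
  shows "K \<le> N \<Longrightarrow> \<exists>\<pi>. (\<forall>s\<in>chainT B L R K. \<pi> s \<ge> 0) \<and> sum \<pi> (chainT B L R K) = 1 \<and>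
           (\<forall>k\<in>{1..K}. \<forall>\<phi>::'b\<Rightarrow>real. (\<Sum>s\<in>chainT B L R K. \<pi> s * \<phi> (s k)) = (\<Sum>b\<in>B k. \<nu> k b * \<phi> b))"
proof (induction K)
  case 0
  have "chainT B L R 0 = {\<lambda>_. undefined}" unfolding chainT_def by auto
  then show ?case by (intro exI[of _ "\<lambda>_. 1"]) auto
next
  case (Suc K)
  let ?T = "chainT B L R K" and ?T' = "chainT B L R (Suc K)"
  have finT: "finite ?T" by (rule chainT_finite[OF fin])
  from Suc obtain \<pi> where pn: "\<forall>s\<in>?T. \<pi> s \<ge> 0" and p1: "sum \<pi> ?T = 1"
    and pm: "\<forall>k\<in>{1..K}. \<forall>\<phi>::'b\<Rightarrow>real. (\<Sum>s\<in>?T. \<pi> s * \<phi> (s k)) = (\<Sum>b\<in>B k. \<nu> k b * \<phi> b)"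
    by auto
  define p where "p x = (\<Sum>b\<in>{b\<in>B (Suc K). L (Suc K) b = x}. \<nu> (Suc K) b)" for x
  define D where "D b = (if K = 0 then 1 else p (L (Suc K) b))" for b
  define C where "C s b = (K = 0 \<or> R K (s K) = L (Suc K) b)" for s b
  define \<pi>' where "\<pi>' s' = \<pi> (s'(Suc K := undefined)) * \<nu> (Suc K) (s' (Suc K)) / D (s' (Suc K))" for s'
  have SKN: "Suc K \<in> {1..N}" using Suc by auto
  have nnS: "\<nu> (Suc K) b \<ge> 0" if "b \<in> B (Suc K)" for b using nn SKN that by blast
  have pnn: "p x \<ge> 0" for x unfolding p_def by (rule sum_nonneg) (use nnS in auto)
  have Dnn: "D b \<ge> 0" for b unfolding D_def using pnn by auto
  have sumeq: "(\<Sum>s'\<in>?T'. G s') = (\<Sum>s\<in>?T. \<Sum>b\<in>{b\<in>B (Suc K). C s b}. G (s(Suc K := b)))" for G :: "_ \<Rightarrow> real"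
    unfolding C_def by (rule chainT_Suc_sum[OF fin])
  have peq: "\<pi>' (s(Suc K := b)) = \<pi> s * \<nu> (Suc K) b / D b" if "s \<in> ?T" for s b
  proof -
    have "(s(Suc K := b))(Suc K := undefined) = s" using chainT_undef[OF that] by (auto simp: fun_eq_iff)
    then show ?thesis unfolding \<pi>'_def by simp
  qed
  have margR: "(\<Sum>s\<in>{s\<in>?T. R K (s K) = x}. \<pi> s) = p x" if "K \<ge> 1" for x
  proof -
    have "(\<Sum>s\<in>?T. \<pi> s * (if R K (s K) = x then 1 else 0)) = (\<Sum>b\<in>B K. \<nu> K b * (if R K b = x then 1 else 0))"
      using pm that by auto
    then have "(\<Sum>s\<in>{s\<in>?T. R K (s K) = x}. \<pi> s) = (\<Sum>b\<in>{b\<in>B K. R K b = x}. \<nu> K b)"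
      by (simp add: sum_ind finT fin)
    also have "\<dots> = p x" unfolding p_def using cons that Suc.prems by auto
    finally show ?thesis .
  qed
  have K1: "\<pi> s * (\<Sum>b\<in>{b\<in>B (Suc K). C s b}. \<nu> (Suc K) b / D b) = \<pi> s" if s: "s \<in> ?T" for s
  proof (cases "K = 0")
    case True
    then show ?thesis unfolding C_def D_def using one SKN by simp
  next
    case False
    let ?x = "R K (s K)"
    have "(\<Sum>b\<in>{b\<in>B (Suc K). C s b}. \<nu> (Suc K) b / D b) = (\<Sum>b\<in>{b\<in>B (Suc K). L (Suc K) b = ?x}. \<nu> (Suc K) b / p ?x)"
      unfolding C_def D_def using False by (intro sum.cong) auto
    also have "\<dots> = p ?x / p ?x" by (simp only: sum_divide_distrib p_def)
    finally have e: "(\<Sum>b\<in>{b\<in>B (Suc K). C s b}. \<nu> (Suc K) b / D b) = p ?x / p ?x" .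
    show ?thesis
    proof (cases "p ?x = 0")
      case True
      have "\<pi> s \<le> (\<Sum>s\<in>{s'\<in>?T. R K (s' K) = ?x}. \<pi> s)"
        by (rule member_le_sum) (use s pn finT in auto)
      then have "\<pi> s = 0" using margR[of ?x] False True pn s by force
      then show ?thesis by simp
    next
      case False
      then show ?thesis using e by simp
    qed
  qed
  have K2: "\<nu> (Suc K) b / D b * (\<Sum>s\<in>{s\<in>?T. C s b}. \<pi> s) = \<nu> (Suc K) b" if b: "b \<in> B (Suc K)" for b
  proof (cases "K = 0")
    case True
    then show ?thesis unfolding C_def D_def using p1 by simp
  next
    case False
    have e: "(\<Sum>s\<in>{s\<in>?T. C s b}. \<pi> s) = D b"
      unfolding C_def D_def using False margR[of "L (Suc K) b"] by simp
    show ?thesis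
    proof (cases "D b = 0")
      case True
      have "\<nu> (Suc K) b \<le> p (L (Suc K) b)" unfolding p_def
        by (rule member_le_sum) (use b nnS fin in auto)
      then have "\<nu> (Suc K) b = 0" using True False nnS[OF b] unfolding D_def by auto
      then show ?thesis by simp
    next
      case False
      then show ?thesis using e by simp
    qed
  qed
  have marg: "(\<Sum>s'\<in>?T'. \<pi>' s' * \<phi> (s' k)) = (\<Sum>b\<in>B k. \<nu> k b * \<phi> b)" if k: "k \<in> {1..Suc K}" for k and \<phi> :: "'b \<Rightarrow> real"
  proof (cases "k = Suc K")
    case False
    then have kK: "k \<in> {1..K}" using k by auto
    have "(\<Sum>s'\<in>?T'. \<pi>' s' * \<phi> (s' k)) = (\<Sum>s\<in>?T. \<Sum>b\<in>{b\<in>B (Suc K). C s b}. \<pi> s * \<nu> (Suc K) b / D b * \<phi> (s k))"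
      unfolding sumeq using False by (intro sum.cong refl) (simp add: peq)
    also have "\<dots> = (\<Sum>s\<in>?T. \<phi> (s k) * (\<pi> s * (\<Sum>b\<in>{b\<in>B (Suc K). C s b}. \<nu> (Suc K) b / D b)))"
      by (intro sum.cong refl) (simp add: sum_distrib_left mult_ac)
    also have "\<dots> = (\<Sum>s\<in>?T. \<pi> s * \<phi> (s k))"
      by (intro sum.cong refl) (simp add: K1)
    also have "\<dots> = (\<Sum>b\<in>B k. \<nu> k b * \<phi> b)" using pm kK by blast
    finally show ?thesis .
  next
    case True
    have "(\<Sum>s'\<in>?T'. \<pi>' s' * \<phi> (s' k)) = (\<Sum>s\<in>?T. \<Sum>b\<in>{b\<in>B (Suc K). C s b}. \<pi> s * \<nu> (Suc K) b / D b * \<phi> b)"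
      unfolding sumeq using True by (intro sum.cong refl) (simp add: peq)
    also have "\<dots> = (\<Sum>b\<in>B (Suc K). \<Sum>s\<in>{s\<in>?T. C s b}. \<pi> s * \<nu> (Suc K) b / D b * \<phi> b)"
      by (rule sum.swap_restrict) (use finT fin in auto)
    also have "\<dots> = (\<Sum>b\<in>B (Suc K). \<phi> b * (\<nu> (Suc K) b / D b * (\<Sum>s\<in>{s\<in>?T. C s b}. \<pi> s)))"
      by (intro sum.cong refl) (simp add: sum_distrib_left sum_distrib_right mult_ac)
    also have "\<dots> = (\<Sum>b\<in>B (Suc K). \<nu> (Suc K) b * \<phi> b)"
      by (intro sum.cong refl) (metis K2 mult.commute)
    finally show ?thesis using True by simp
  qed
  have nn': "\<forall>s'\<in>?T'. \<pi>' s' \<ge> 0"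
  proof
    fix s' assume s': "s' \<in> ?T'"
    show "\<pi>' s' \<ge> 0" unfolding \<pi>'_def
      using pn chainT_Suc_mem(1)[OF s'] nnS[OF chainT_Suc_mem(2)[OF s']] Dnn by simp
  qed
  have "sum \<pi>' ?T' = 1"
    using marg[of 1 "\<lambda>_. 1"] one SKN by simp
  then show ?case using nn' marg by blast
qed



locale thm6 =
  fixes H :: "nat \<Rightarrow> nat \<Rightarrow> 'r::{ring_1,finite}" and m n :: nat and pos :: "nat \<Rightarrow> nat \<Rightarrow> nat"
  assumes deg4: "\<forall>j\<in>{1..m}. deg H n j \<ge> 4"
    and order: "\<forall>j\<in>{1..m}. bij_betw (pos j) {1..deg H n j} (Iset H n j)"
begin

abbreviation "dg j \<equiv> deg H n j"
abbreviation "FM \<equiv> F_mat H m n pos"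
abbreviation "FR \<equiv> F_rows H m n"
abbreviation "FC \<equiv> F_cols H m n"
abbreviation "cpos \<equiv> F_cpos H n pos"

lemma posI: "j \<in> {1..m} \<Longrightarrow> t \<in> {1..dg j} \<Longrightarrow> pos j t \<in> Iset H n j"
  using order bij_betwE by blast

lemma pos_inj: "j \<in> {1..m} \<Longrightarrow> t \<in> {1..dg j} \<Longrightarrow> t' \<in> {1..dg j} \<Longrightarrow> pos j t = pos j t' \<Longrightarrow> t = t'"
  using order unfolding bij_betw_def inj_on_def by blast

lemma Iset_props: "i \<in> Iset H n j \<Longrightarrow> i \<in> {1..n} \<and> H j i \<noteq> 0"
  unfolding Iset_def by auto

lemma rsH: "row_supp H {1..n} j = Iset H n j"
  unfolding row_supp_def Iset_def by auto

lemma dg4: "j \<in> {1..m} \<Longrightarrow> dg j \<ge> 4" using deg4 by blast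

lemma one_neq: "j \<in> {1..m} \<Longrightarrow> (1::'r) \<noteq> 0"
proof
  assume j: "j \<in> {1..m}" and o: "(1::'r) = 0"
  have "pos j 1 \<in> Iset H n j" using posI[OF j, of 1] dg4[OF j] by auto
  then have "H j (pos j 1) \<noteq> 0" using Iset_props by blast
  moreover have "\<And>x::'r. x = 0" by (metis mult_1 mult_zero_left o)
  ultimately show False by blast
qed

lemma cpos_sub: "j \<in> {1..m} \<Longrightarrow> 1 \<le> k \<Longrightarrow> k \<le> dg j - 2 \<Longrightarrow> cpos j k \<subseteq> Iset H n j"
  using posI[of j] dg4[of j] unfolding F_cpos_def by auto

lemma rsF: assumes j: "j \<in> {1..m}" and k: "1 \<le> k" "k \<le> dg j - 2"
  shows "row_supp FM FC (j,k) = Inl ` cpos j k \<union> (if k \<le> dg j - 3 then {Inr (j,k)} else {})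
            \<union> (if 2 \<le> k then {Inr (j,k-1)} else {})"
proof -
  have jk: "(j,k) \<in> FR" unfolding F_rows_def using j k by auto
  have o: "(1::'r) \<noteq> 0" by (rule one_neq[OF j])
  have cs: "cpos j k \<subseteq> Iset H n j" by (rule cpos_sub[OF j k])
  show ?thesis
  proof (rule set_eqI)
    fix c show "c \<in> row_supp FM FC (j,k) \<longleftrightarrow> c \<in> Inl ` cpos j k \<union> (if k \<le> dg j - 3 then {Inr (j,k)} else {})
            \<union> (if 2 \<le> k then {Inr (j,k-1)} else {})"
    proof (cases c)
      case (Inl i)
      then show ?thesis using jk cs Iset_props[of i j] unfolding row_supp_def F_cols_def
        by (auto simp: F_mat_def)
    next
      case (Inr p)
      then obtain j' l where p: "c = Inr (j', l)" by (cases p) auto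
      show ?thesis using jk j k o unfolding p row_supp_def F_cols_def
        by (auto simp: F_mat_def)
    qed
  qed
qed

lemma FM_Inl: "(j,k) \<in> FR \<Longrightarrow> i \<in> cpos j k \<Longrightarrow> FM (j,k) (Inl i) = H j i"
  by (simp add: F_mat_def)
lemma FM_Inr1: "(j,k) \<in> FR \<Longrightarrow> k \<le> dg j - 3 \<Longrightarrow> FM (j,k) (Inr (j,k)) = 1"
  by (simp add: F_mat_def)
lemma FM_Inr2: "(j,k) \<in> FR \<Longrightarrow> 2 \<le> k \<Longrightarrow> FM (j,k) (Inr (j,k-1)) = -1"
  by (auto simp: F_mat_def)

lemma inFR: "j \<in> {1..m} \<Longrightarrow> 1 \<le> k \<Longrightarrow> k \<le> dg j - 2 \<Longrightarrow> (j,k) \<in> FR"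
  unfolding F_rows_def by auto

lemma cpos_sum: assumes j: "j \<in> {1..m}" and k: "1 \<le> k" "k \<le> dg j - 2"
  shows "(\<Sum>i\<in>cpos j k. f i) = (if k = 1 then f (pos j 1) + f (pos j 2)
     else if k = dg j - 2 then f (pos j (dg j - 1)) + f (pos j (dg j)) else f (pos j (k+1)))"
proof -
  have d: "dg j \<ge> 4" by (rule dg4[OF j])
  have n1: "pos j 1 \<noteq> pos j 2" using pos_inj[OF j, of 1 2] d by auto
  have "dg j - 1 \<in> {1..dg j}" "dg j \<in> {1..dg j}" "dg j - 1 \<noteq> dg j" using d by auto
  then have n2: "pos j (dg j - 1) \<noteq> pos j (dg j)" using pos_inj[OF j, of "dg j - 1" "dg j"] by blast
  show ?thesis unfolding F_cpos_def using n1 n2 by auto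
qed

lemma row_eq: assumes j: "j \<in> {1..m}" and k: "1 \<le> k" "k \<le> dg j - 2"
  shows "(\<Sum>c\<in>row_supp FM FC (j,k). G c * FM (j,k) c) =
     (\<Sum>i\<in>cpos j k. G (Inl i) * H j i) + (if k \<le> dg j - 3 then G (Inr (j,k)) else 0)
       - (if 2 \<le> k then G (Inr (j,k-1)) else 0)"
proof -
  have d: "dg j \<ge> 4" by (rule dg4[OF j])
  have jk: "(j,k) \<in> FR" by (rule inFR[OF j k])
  have fin: "finite (cpos j k)" unfolding F_cpos_def by auto
  have s1: "(\<Sum>c\<in>Inl ` cpos j k. G c * FM (j,k) c) = (\<Sum>i\<in>cpos j k. G (Inl i) * H j i)"
    by (simp add: sum.reindex FM_Inl[OF jk])
  let ?A = "Inl ` cpos j k" and ?B = "(if k \<le> dg j - 3 then {Inr (j,k)} else {})"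
    and ?C = "(if 2 \<le> k then {Inr (j,k-1)} else {}) :: (nat + nat \<times> nat) set"
  have "(\<Sum>c\<in>?A \<union> ?B \<union> ?C. G c * FM (j,k) c) = (\<Sum>c\<in>?A \<union> ?B. G c * FM (j,k) c) + (\<Sum>c\<in>?C. G c * FM (j,k) c)"
    by (rule sum.union_disjoint) (use fin in auto)
  also have "(\<Sum>c\<in>?A \<union> ?B. G c * FM (j,k) c) = (\<Sum>c\<in>?A. G c * FM (j,k) c) + (\<Sum>c\<in>?B. G c * FM (j,k) c)"
    by (rule sum.union_disjoint) (use fin in auto)
  moreover have "(\<Sum>c\<in>?B. G c * FM (j,k) c) = (if k \<le> dg j - 3 then G (Inr (j,k)) else 0)"
    using FM_Inr1[OF jk] by simp
  moreover have "(\<Sum>c\<in>?C. G c * FM (j,k) c) = (if 2 \<le> k then - G (Inr (j,k-1)) else 0)"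
    using FM_Inr2[OF jk] by simp
  ultimately have "(\<Sum>c\<in>?A \<union> ?B \<union> ?C. G c * FM (j,k) c) = (\<Sum>i\<in>cpos j k. G (Inl i) * H j i) + (if k \<le> dg j - 3 then G (Inr (j,k)) else 0)
      + (if 2 \<le> k then - G (Inr (j,k-1)) else 0)" using s1 by simp
  then show ?thesis unfolding rsF[OF j k] by simp
qed

end


lemma split_sum:
  fixes a :: "nat \<Rightarrow> 'a::comm_monoid_add"
  assumes "d \<ge> 4"
  shows "(\<Sum>k\<in>{1..d-2}. (if k = 1 then a 1 + a 2 else if k = d-2 then a (d-1) + a d else a (k+1)))
         = (\<Sum>t\<in>{1..d}. a t)"
proof -
  obtain e where d: "d = e + 4" using assms by (metis add.commute le_Suc_ex)
  have s1: "{1..d-2} = insert 1 (insert (e+2) {2..e+1})" unfolding d by auto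
  have s2: "{1..d} = insert 1 (insert 2 (insert (e+3) (insert (e+4) {3..e+2})))" unfolding d by auto
  have m: "(\<Sum>k\<in>{2..e+1}. a (k+1)) = (\<Sum>t\<in>{3..e+2}. a t)"
  proof -
    have "(\<Sum>t\<in>{3..e+2}. a t) = (\<Sum>t\<in>{Suc 2..Suc (e+1)}. a t)" by simp
    also have "\<dots> = (\<Sum>k\<in>{2..e+1}. a (Suc k))" by (rule sum.shift_bounds_cl_Suc_ivl)
    finally show ?thesis by simp
  qed
  have "(\<Sum>k\<in>{1..d-2}. (if k = 1 then a 1 + a 2 else if k = d-2 then a (d-1) + a d else a (k+1)))
     = (a 1 + a 2) + ((a (e+3) + a (e+4)) + (\<Sum>k\<in>{2..e+1}. (if k = 1 then a 1 + a 2 else if k = d-2 then a (d-1) + a d else a (k+1))))"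
    unfolding s1 by (simp add: d ac_simps)
  also have "(\<Sum>k\<in>{2..e+1}. (if k = 1 then a 1 + a 2 else if k = d-2 then a (d-1) + a d else a (k+1))) = (\<Sum>k\<in>{2..e+1}. a (k+1))"
    by (rule sum.cong) (auto simp: d)
  also have "(\<Sum>t\<in>{1..d}. a t) = a 1 + (a 2 + (a (e+3) + (a (e+4) + (\<Sum>t\<in>{3..e+2}. a t))))"
    unfolding s2 by simp
  ultimately show ?thesis using m by (simp add: ac_simps)
qed

lemma tele_sum:
  fixes x :: "nat \<Rightarrow> 'a::ab_group_add"
  assumes "d \<ge> 4"
  shows "(\<Sum>k\<in>{1..d-2}. (if k \<le> d-3 then x k else 0) - (if 2 \<le> k then x (k-1) else 0)) = 0"
proof -
  obtain e where d: "d = e + 4" using assms by (metis add.commute le_Suc_ex)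
  have a: "(\<Sum>k\<in>{1..d-2}. (if k \<le> d-3 then x k else 0)) = (\<Sum>k\<in>{1..e+1}. x k)"
  proof -
    have "{1..d-2} = insert (e+2) {1..e+1}" unfolding d by auto
    then show ?thesis by (simp add: d)
  qed
  have b: "(\<Sum>k\<in>{1..d-2}. (if 2 \<le> k then x (k-1) else 0)) = (\<Sum>k\<in>{1..e+1}. x k)"
  proof -
    have "{1..d-2} = insert 1 {Suc 1..Suc (e+1)}" unfolding d by auto
    then have "(\<Sum>k\<in>{1..d-2}. (if 2 \<le> k then x (k-1) else 0)) = (\<Sum>k\<in>{Suc 1..Suc (e+1)}. (if 2 \<le> k then x (k-1) else 0))"
      by simp
    also have "\<dots> = (\<Sum>k\<in>{1..e+1}. (if 2 \<le> Suc k then x (Suc k - 1) else 0))" by (rule sum.shift_bounds_cl_Suc_ivl)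
    also have "\<dots> = (\<Sum>k\<in>{1..e+1}. x k)" by (rule sum.cong) auto
    finally show ?thesis .
  qed
  show ?thesis unfolding sum_subtractf a b by simp
qed

context thm6 begin

lemma finFC: "finite FC"
proof -
  have e: "{Inr (j, l) | j l. j \<in> {1..m} \<and> l \<in> {1..dg j - 3}} = Inr ` (Sigma {1..m} (\<lambda>j. {1..dg j - 3}))"
    by blast
  have "finite (Sigma {1..m} (\<lambda>j. {1..dg j - 3}))" by (intro finite_SigmaI) auto
  then have "finite {Inr (j, l) | j l. j \<in> {1..m} \<and> l \<in> {1..dg j - 3}}" unfolding e by (rule finite_imageI)
  then have "finite (Inl ` {1..n} \<union> {Inr (j, l) | j l. j \<in> {1..m} \<and> l \<in> {1..dg j - 3}})" by blast
  then show ?thesis unfolding F_cols_def .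
qed

lemma finLCF: "finite (local_code FM FC \<rho>)"
proof -
  have "local_code FM FC \<rho> \<subseteq> {g. \<forall>x. x \<notin> FC \<longrightarrow> g x = 0}"
    unfolding local_code_def row_supp_def by auto
  then show ?thesis using finite_vanish[OF finFC] by (rule finite_subset)
qed

lemma finLCH: "finite (local_code H {1..n} j)"
proof -
  have "local_code H {1..n} j \<subseteq> {g. \<forall>x. x \<notin> {1..n} \<longrightarrow> g x = 0}"
    unfolding local_code_def row_supp_def by auto
  then show ?thesis using finite_vanish[of "{1..n}"] by (auto intro: finite_subset)
qed

definition psum :: "nat \<Rightarrow> nat \<Rightarrow> (nat \<Rightarrow> 'r) \<Rightarrow> 'r" where
  "psum j l g = (\<Sum>t\<in>{1..l}. g (pos j t) * H j (pos j t))"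

lemma psum_Suc: "psum j (Suc l) g = psum j l g + g (pos j (Suc l)) * H j (pos j (Suc l))"
  unfolding psum_def by simp

lemma psum_0: "psum j 0 g = 0" unfolding psum_def by simp

lemma psum_full: assumes j: "j \<in> {1..m}"
  shows "psum j (dg j) g = (\<Sum>i\<in>Iset H n j. g i * H j i)"
  unfolding psum_def using sum.reindex_bij_betw[OF order[rule_format, OF j], of "\<lambda>i. g i * H j i"] by simp

definition chi :: "nat \<Rightarrow> nat \<Rightarrow> (nat \<Rightarrow> 'r) \<Rightarrow> 'r" where
  "chi j l g = - psum j (l+1) g"

definition ext :: "nat \<Rightarrow> (nat \<Rightarrow> 'r) \<Rightarrow> nat + nat \<times> nat \<Rightarrow> 'r" where
  "ext j g c = (case c of Inl i \<Rightarrow> g i | Inr (j', l) \<Rightarrow> chi j l g)"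

definition rg :: "nat \<Rightarrow> nat \<Rightarrow> (nat \<Rightarrow> 'r) \<Rightarrow> nat + nat \<times> nat \<Rightarrow> 'r" where
  "rg j k g c = (if c \<in> row_supp FM FC (j,k) then ext j g c else 0)"

lemma rg_in: assumes j: "j \<in> {1..m}" and k: "1 \<le> k" "k \<le> dg j - 2" and g: "g \<in> local_code H {1..n} j"
  shows "rg j k g \<in> local_code FM FC (j,k)"
proof -
  have d: "dg j \<ge> 4" by (rule dg4[OF j])
  have g0: "(\<Sum>i\<in>Iset H n j. g i * H j i) = 0" using g unfolding local_code_def rsH by auto
  let ?a = "\<lambda>t. g (pos j t) * H j (pos j t)"
  have "(\<Sum>c\<in>row_supp FM FC (j,k). rg j k g c * FM (j,k) c) = (\<Sum>c\<in>row_supp FM FC (j,k). ext j g c * FM (j,k) c)"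
    unfolding rg_def by simp
  also have "\<dots> = (\<Sum>i\<in>cpos j k. g i * H j i) + (if k \<le> dg j - 3 then chi j k g else 0)
       - (if 2 \<le> k then chi j (k-1) g else 0)"
    unfolding row_eq[OF j k] by (simp add: ext_def)
  also have "\<dots> = 0"
  proof -
    consider "k = 1" | "k = dg j - 2" | "2 \<le> k" "k \<le> dg j - 3" using k d by linarith
    then show ?thesis
    proof cases
      case 1
      have "psum j (Suc (Suc 0)) g = ?a 1 + ?a 2" by (simp add: numeral_2_eq_2 psum_Suc psum_0)
      moreover have "Suc 0 \<le> dg j - 3" using d by simp
      ultimately show ?thesis using 1 d unfolding cpos_sum[OF j k] chi_def by simp
    next
      case 2
      have e: "dg j = Suc (Suc (dg j - 2))" using d by simp
      have "psum j (dg j) g = psum j (dg j - 2) g + ?a (dg j - 1) + ?a (dg j)"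
        by (subst e, simp only: psum_Suc) (use d in \<open>simp add: add.assoc Suc_diff_Suc numeral_2_eq_2\<close>)
      then have "psum j (dg j - 2) g + (?a (dg j - 1) + ?a (dg j)) = 0" using g0 psum_full[OF j, of g]
        by (simp add: add.assoc)
      then have h: "?a (dg j - 1) + ?a (dg j) = - psum j (dg j - 2) g" by (metis neg_eq_iff_add_eq_0)
      moreover have "dg j - 2 - 1 + 1 = dg j - 2" "2 \<le> dg j - 2" "\<not> dg j - 2 \<le> dg j - 3" "dg j - 2 \<noteq> 1" using d by auto
      ultimately show ?thesis using 2 unfolding cpos_sum[OF j k] chi_def by simp
    next
      case 3
      then have "k \<noteq> 1" "k \<noteq> dg j - 2" by auto
      moreover have "k - 1 + 1 = k" "k + 1 = Suc k" using 3 by auto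
      ultimately show ?thesis using 3 unfolding cpos_sum[OF j k] chi_def by (simp add: psum_Suc)
    qed
  qed
  finally show ?thesis unfolding local_code_def rg_def by auto
qed

lemma FR_iff: "(j,k) \<in> FR \<longleftrightarrow> j \<in> {1..m} \<and> 1 \<le> k \<and> k \<le> dg j - 2"
  unfolding F_rows_def by auto

lemma Inl_FC: "Inl i \<in> FC \<longleftrightarrow> i \<in> {1..n}"
  unfolding F_cols_def by auto

lemma Inr_FC: "Inr (j,l) \<in> FC \<longleftrightarrow> j \<in> {1..m} \<and> l \<in> {1..dg j - 3}"
  unfolding F_cols_def by auto

lemma QtoS:
  assumes fw: "(f,w) \<in> polytopeQ H {1..m} {1..n}"
  shows "\<exists>F Z. f = (\<lambda>i \<alpha>. F (Inl i) \<alpha>) \<and> (F,Z) \<in> polytopeQ FM FR FC"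
proof -
  have Qf0: "\<And>i \<alpha>. i \<notin> {1..n} \<or> \<alpha> = 0 \<Longrightarrow> f i \<alpha> = 0" using fw unfolding polytopeQ_def by blast
  have Qnn: "\<And>j g. j \<in> {1..m} \<Longrightarrow> g \<in> local_code H {1..n} j \<Longrightarrow> w j g \<ge> 0"
    using fw unfolding polytopeQ_def by blast
  have Q1: "\<And>j. j \<in> {1..m} \<Longrightarrow> (\<Sum>g\<in>local_code H {1..n} j. w j g) = 1"
    using fw unfolding polytopeQ_def by blast
  have Qm: "\<And>j i \<alpha>. j \<in> {1..m} \<Longrightarrow> i \<in> Iset H n j \<Longrightarrow> \<alpha> \<noteq> 0 \<Longrightarrow>
      f i \<alpha> = (\<Sum>g\<in>{g \<in> local_code H {1..n} j. g i = \<alpha>}. w j g)"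
    using fw unfolding polytopeQ_def rsH by blast
  define Fn where "Fn c \<alpha> = (case c of Inl i \<Rightarrow> f i \<alpha> | Inr (j,l) \<Rightarrow>
      (if j \<in> {1..m} \<and> l \<in> {1..dg j - 3} \<and> \<alpha> \<noteq> 0
       then (\<Sum>g\<in>{g \<in> local_code H {1..n} j. chi j l g = \<alpha>}. w j g) else 0))" for c \<alpha>
  define Zn where "Zn \<rho> G = (if \<rho> \<in> FR \<and> G \<in> local_code FM FC \<rho>
      then (\<Sum>g\<in>{g \<in> local_code H {1..n} (fst \<rho>). rg (fst \<rho>) (snd \<rho>) g = G}. w (fst \<rho>) g) else 0)" for \<rho> G
  have fiber: "(\<Sum>G\<in>{G\<in>local_code FM FC (j,k). P G}. Zn (j,k) G)
      = (\<Sum>g\<in>{g\<in>local_code H {1..n} j. P (rg j k g)}. w j g)" if jk: "(j,k) \<in> FR" for j k P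
  proof -
    have jk': "j \<in> {1..m}" "1 \<le> k" "k \<le> dg j - 2" using jk FR_iff by auto
    have "(\<Sum>G\<in>{G\<in>local_code FM FC (j,k). P G}. Zn (j,k) G)
      = (\<Sum>G\<in>{G\<in>local_code FM FC (j,k). P G}. \<Sum>g\<in>{g \<in> local_code H {1..n} j. rg j k g = G}. w j g)"
      unfolding Zn_def using jk by (intro sum.cong refl) auto
    also have "\<dots> = (\<Sum>g\<in>{g\<in>local_code H {1..n} j. P (rg j k g)}. w j g)"
      by (rule fiber_sum) (use finLCF finLCH rg_in[OF jk'] in auto)
    finally show ?thesis .
  qed
  have c1: "\<forall>c \<alpha>. (c \<notin> FC \<or> \<alpha> = 0) \<longrightarrow> Fn c \<alpha> = 0"
  proof (intro allI impI)
    fix c and \<alpha> :: 'r assume h: "c \<notin> FC \<or> \<alpha> = 0"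
    show "Fn c \<alpha> = 0"
    proof (cases c)
      case (Inl i)
      then show ?thesis using h Qf0[of i \<alpha>] Inl_FC[of i] unfolding Fn_def by auto
    next
      case (Inr p)
      then obtain j l where "c = Inr (j,l)" by (cases p) auto
      then show ?thesis using h Inr_FC[of j l] unfolding Fn_def by auto
    qed
  qed
  have c2: "\<forall>\<rho> G. (\<rho> \<notin> FR \<or> G \<notin> local_code FM FC \<rho>) \<longrightarrow> Zn \<rho> G = 0"
    unfolding Zn_def by auto
  have c3: "\<forall>\<rho>\<in>FR. (\<forall>G\<in>local_code FM FC \<rho>. Zn \<rho> G \<ge> 0) \<and> (\<Sum>G\<in>local_code FM FC \<rho>. Zn \<rho> G) = 1"
  proof
    fix \<rho> assume r: "\<rho> \<in> FR"
    obtain j k where \<rho>: "\<rho> = (j,k)" by (cases \<rho>)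
    have jk: "(j,k) \<in> FR" using r \<rho> by simp
    have j: "j \<in> {1..m}" using jk FR_iff by auto
    have "(\<Sum>G\<in>{G\<in>local_code FM FC (j,k). True}. Zn (j,k) G) = (\<Sum>g\<in>{g\<in>local_code H {1..n} j. True}. w j g)"
      by (rule fiber[OF jk])
    then have "(\<Sum>G\<in>local_code FM FC (j,k). Zn (j,k) G) = 1" using Q1[OF j] by simp
    moreover have "\<forall>G\<in>local_code FM FC (j,k). Zn (j,k) G \<ge> 0"
      unfolding Zn_def using Qnn[OF j] by (auto intro!: sum_nonneg)
    ultimately show "(\<forall>G\<in>local_code FM FC \<rho>. Zn \<rho> G \<ge> 0) \<and> (\<Sum>G\<in>local_code FM FC \<rho>. Zn \<rho> G) = 1"
      using \<rho> by simp
  qed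
  have c4: "\<forall>\<rho>\<in>FR. \<forall>c\<in>row_supp FM FC \<rho>. \<forall>\<alpha>. \<alpha> \<noteq> 0 \<longrightarrow>
          Fn c \<alpha> = (\<Sum>G\<in>{G \<in> local_code FM FC \<rho>. G c = \<alpha>}. Zn \<rho> G)"
  proof (intro ballI allI impI)
    fix \<rho> c and \<alpha> :: 'r assume r: "\<rho> \<in> FR" and c: "c \<in> row_supp FM FC \<rho>" and a: "\<alpha> \<noteq> 0"
    obtain j k where \<rho>: "\<rho> = (j,k)" by (cases \<rho>)
    have jk: "(j,k) \<in> FR" using r \<rho> by simp
    have j: "j \<in> {1..m}" and k: "1 \<le> k" "k \<le> dg j - 2" using jk FR_iff by auto
    have d: "dg j \<ge> 4" by (rule dg4[OF j])
    have c': "c \<in> row_supp FM FC (j,k)" using c \<rho> by simp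
    have "(\<Sum>G\<in>{G \<in> local_code FM FC (j,k). G c = \<alpha>}. Zn (j,k) G) = (\<Sum>g\<in>{g\<in>local_code H {1..n} j. rg j k g c = \<alpha>}. w j g)"
      by (rule fiber[OF jk])
    also have "\<dots> = (\<Sum>g\<in>{g\<in>local_code H {1..n} j. ext j g c = \<alpha>}. w j g)"
      unfolding rg_def using c' by simp
    also have "\<dots> = Fn c \<alpha>"
    proof (cases c)
      case (Inl i)
      then have "i \<in> cpos j k" using c' rsF[OF j k] by (auto split: if_splits)
      then have "i \<in> Iset H n j" using cpos_sub[OF j k] by auto
      then show ?thesis using Qm[OF j _ a] Inl unfolding Fn_def ext_def by simp
    next
      case (Inr p)
      then have "(p = (j,k) \<and> k \<le> dg j - 3) \<or> (p = (j, k-1) \<and> 2 \<le> k)" using c' rsF[OF j k] by (auto split: if_splits)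
      then have "\<exists>l. p = (j,l) \<and> l \<in> {1..dg j - 3}"
      proof
        assume "p = (j, k-1) \<and> 2 \<le> k"
        moreover have "k - 1 \<in> {1..dg j - 3}" using calculation k d by auto
        ultimately show ?thesis by blast
      qed (use k in auto)
      then obtain l where p: "p = (j,l)" and l: "l \<in> {1..dg j - 3}" by auto
      show ?thesis using Inr p l j a unfolding Fn_def ext_def by simp
    qed
    finally show "Fn c \<alpha> = (\<Sum>G\<in>{G \<in> local_code FM FC \<rho>. G c = \<alpha>}. Zn \<rho> G)" using \<rho> by simp
  qed
  have "(Fn, Zn) \<in> polytopeQ FM FR FC" unfolding polytopeQ_def using c1 c2 c3 c4 by blast
  moreover have "f = (\<lambda>i \<alpha>. Fn (Inl i) \<alpha>)" unfolding Fn_def by simp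
  ultimately show ?thesis by blast
qed

lemma StoQ_j:
  assumes FZ: "(F,Z) \<in> polytopeQ FM FR FC" and j: "j \<in> {1..m}"
  shows "\<exists>wj. (\<forall>g\<in>local_code H {1..n} j. wj g \<ge> 0) \<and> (\<Sum>g\<in>local_code H {1..n} j. wj g) = 1 \<and>
     (\<forall>i\<in>Iset H n j. \<forall>\<alpha>. \<alpha> \<noteq> 0 \<longrightarrow> F (Inl i) \<alpha> = (\<Sum>g\<in>{g\<in>local_code H {1..n} j. g i = \<alpha>}. wj g))"
proof -
  have Snn: "\<And>\<rho> G. \<rho> \<in> FR \<Longrightarrow> G \<in> local_code FM FC \<rho> \<Longrightarrow> Z \<rho> G \<ge> 0"
    using FZ unfolding polytopeQ_def by blast
  have S1: "\<And>\<rho>. \<rho> \<in> FR \<Longrightarrow> (\<Sum>G\<in>local_code FM FC \<rho>. Z \<rho> G) = 1"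
    using FZ unfolding polytopeQ_def by blast
  have Sm: "\<And>\<rho> c \<alpha>. \<rho> \<in> FR \<Longrightarrow> c \<in> row_supp FM FC \<rho> \<Longrightarrow> \<alpha> \<noteq> 0 \<Longrightarrow>
      F c \<alpha> = (\<Sum>G\<in>{G \<in> local_code FM FC \<rho>. G c = \<alpha>}. Z \<rho> G)"
    using FZ unfolding polytopeQ_def by blast
  define d where "d = dg j"
  have d4: "d \<ge> 4" unfolding d_def by (rule dg4[OF j])
  define N where "N = d - 2"
  define B where "B k = local_code FM FC (j,k)" for k
  define \<nu> where "\<nu> k = Z (j,k)" for k
  define L :: "nat \<Rightarrow> (nat + nat \<times> nat \<Rightarrow> 'r) \<Rightarrow> 'r" where "L k G = G (Inr (j, k-1))" for k G
  define R :: "nat \<Rightarrow> (nat + nat \<times> nat \<Rightarrow> 'r) \<Rightarrow> 'r" where "R k G = G (Inr (j, k))" for k G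
  have kFR: "(j,k) \<in> FR" if "k \<in> {1..N}" for k using that j unfolding FR_iff N_def d_def by auto
  have fin: "\<forall>k. finite (B k)" unfolding B_def using finLCF by blast
  have nn: "\<forall>k\<in>{1..N}. \<forall>b\<in>B k. \<nu> k b \<ge> 0" unfolding B_def \<nu>_def using Snn kFR by blast
  have one: "\<forall>k\<in>{1..N}. sum (\<nu> k) (B k) = 1" unfolding B_def \<nu>_def using S1 kFR by blast
  have cons: "\<forall>k. 1 \<le> k \<longrightarrow> k < N \<longrightarrow> (\<forall>x. (\<Sum>b\<in>{b\<in>B k. R k b = x}. \<nu> k b) = (\<Sum>b\<in>{b\<in>B (Suc k). L (Suc k) b = x}. \<nu> (Suc k) b))"
  proof (intro allI impI)
    fix k x assume k1: "1 \<le> k" and kN: "k < N"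
    have jk: "(j,k) \<in> FR" and jk': "(j, Suc k) \<in> FR" using kFR k1 kN by auto
    have r1: "Inr (j,k) \<in> row_supp FM FC (j,k)" using rsF[OF j, of k] k1 kN unfolding N_def d_def by auto
    have r2: "Inr (j,k) \<in> row_supp FM FC (j,Suc k)" using rsF[OF j, of "Suc k"] k1 kN unfolding N_def d_def by auto
    have a: "(\<Sum>b\<in>{b\<in>B k. R k b = a}. \<nu> k b) = (\<Sum>b\<in>{b\<in>B (Suc k). L (Suc k) b = a}. \<nu> (Suc k) b)"
      if "a \<noteq> 0" for a
      using Sm[OF jk r1 that] Sm[OF jk' r2 that] unfolding B_def \<nu>_def L_def R_def by simp
    show "(\<Sum>b\<in>{b\<in>B k. R k b = x}. \<nu> k b) = (\<Sum>b\<in>{b\<in>B (Suc k). L (Suc k) b = x}. \<nu> (Suc k) b)"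
    proof (cases "x = 0")
      case False
      then show ?thesis by (rule a)
    next
      case True
      have e1: "(\<Sum>b\<in>{b\<in>B k. R k b = 0}. \<nu> k b) = 1 - (\<Sum>a\<in>UNIV-{0}. \<Sum>b\<in>{b\<in>B k. R k b = a}. \<nu> k b)"
        by (rule zero_marg) (use fin one k1 kN in auto)
      have e2: "(\<Sum>b\<in>{b\<in>B (Suc k). L (Suc k) b = 0}. \<nu> (Suc k) b) = 1 - (\<Sum>a\<in>UNIV-{0}. \<Sum>b\<in>{b\<in>B (Suc k). L (Suc k) b = a}. \<nu> (Suc k) b)"
        by (rule zero_marg) (use fin one k1 kN in auto)
      have "(\<Sum>a\<in>UNIV-{0}. \<Sum>b\<in>{b\<in>B k. R k b = a}. \<nu> k b) = (\<Sum>a\<in>UNIV-{0}. \<Sum>b\<in>{b\<in>B (Suc k). L (Suc k) b = a}. \<nu> (Suc k) b)"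
        by (rule sum.cong[OF refl]) (simp add: a)
      then show ?thesis using e1 e2 True by simp
    qed
  qed
  obtain \<pi> where pn: "\<forall>s\<in>chainT B L R N. \<pi> s \<ge> 0" and p1: "sum \<pi> (chainT B L R N) = 1"
    and pm: "\<forall>k\<in>{1..N}. \<forall>\<phi>::(nat + nat \<times> nat \<Rightarrow> 'r)\<Rightarrow>real. (\<Sum>s\<in>chainT B L R N. \<pi> s * \<phi> (s k)) = (\<Sum>b\<in>B k. \<nu> k b * \<phi> b)"
    using chain_glue[OF fin nn one cons, of N] by auto
  let ?T = "chainT B L R N"
  let ?LC = "local_code H {1..n} j"
  have finT: "finite ?T" by (rule chainT_finite[OF fin])
  have bij: "bij_betw (pos j) {1..d} (Iset H n j)" using order j unfolding d_def by blast
  have injp: "inj_on (pos j) {1..d}" using bij bij_betw_def by blast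
  define idx where "idx i = the_inv_into {1..d} (pos j) i" for i
  define rowidx where "rowidx t = (if t \<le> 2 then 1 else if t \<ge> d - 1 then d - 2 else t - 1)" for t
  define \<Phi> where "\<Phi> s i = (if i \<in> Iset H n j then s (rowidx (idx i)) (Inl i) else (0::'r))" for s :: "nat \<Rightarrow> nat + nat \<times> nat \<Rightarrow> 'r" and i
  have idx_pos: "idx (pos j t) = t" if "t \<in> {1..d}" for t
    unfolding idx_def using the_inv_into_f_f[OF injp that] .
  have pos_idx: "pos j (idx i) = i" "idx i \<in> {1..d}" if "i \<in> Iset H n j" for i
  proof -
    have im: "i \<in> pos j ` {1..d}" using bij that unfolding bij_betw_def by auto
    show "pos j (idx i) = i" unfolding idx_def using f_the_inv_into_f[OF injp im] .
    show "idx i \<in> {1..d}" unfolding idx_def using the_inv_into_into[OF injp im subset_refl] .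
  qed
  have rowidx_ok: "rowidx t \<in> {1..N} \<and> pos j t \<in> cpos j (rowidx t)" if "t \<in> {1..d}" for t
  proof -
    have "t = 1 \<or> t = 2 \<or> t = d - 1 \<or> t = d \<or> (3 \<le> t \<and> t \<le> d - 2)" using that d4 by auto
    then show ?thesis using d4 unfolding rowidx_def N_def F_cpos_def d_def[symmetric] by auto
  qed
  have \<Phi>_pos: "\<Phi> s (pos j t) = s (rowidx t) (Inl (pos j t))" if "t \<in> {1..d}" for s t
    unfolding \<Phi>_def using idx_pos[OF that] posI[OF j, of t] that d_def by auto
  have \<Phi>_in: "\<Phi> s \<in> ?LC" if s: "s \<in> ?T" for s
  proof -
    have sk: "s k \<in> B k" if "k \<in> {1..N}" for k using s that unfolding chainT_def by blast
    have scons: "s k (Inr (j,k)) = s (Suc k) (Inr (j,k))" if "1 \<le> k" "k < N" for k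
      using s that unfolding chainT_def L_def R_def by auto
    define x where "x k = s k (Inr (j,k))" for k
    have rowk: "(\<Sum>i\<in>cpos j k. s k (Inl i) * H j i) = - ((if k \<le> d - 3 then x k else 0) - (if 2 \<le> k then x (k-1) else 0))"
      if k: "k \<in> {1..N}" for k
    proof -
      have k': "1 \<le> k" "k \<le> dg j - 2" using k unfolding N_def d_def by auto
      have "(\<Sum>c\<in>row_supp FM FC (j,k). s k c * FM (j,k) c) = 0" using sk[OF k] unfolding B_def local_code_def by blast
      then have e: "(\<Sum>i\<in>cpos j k. s k (Inl i) * H j i) + (if k \<le> d - 3 then x k else 0)
         - (if 2 \<le> k then s k (Inr (j,k-1)) else 0) = 0"
        unfolding row_eq[OF j k'] x_def d_def by simp
      have "(if 2 \<le> k then s k (Inr (j,k-1)) else 0) = (if 2 \<le> k then x (k-1) else 0)"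
        using scons[of "k-1"] k unfolding x_def N_def by auto
      then show ?thesis using e by (simp add: algebra_simps eq_neg_iff_add_eq_0)
    qed
    let ?a = "\<lambda>t. s (rowidx t) (Inl (pos j t)) * H j (pos j t)"
    have "(\<Sum>i\<in>Iset H n j. \<Phi> s i * H j i) = (\<Sum>t\<in>{1..d}. \<Phi> s (pos j t) * H j (pos j t))"
      using sum.reindex_bij_betw[OF bij, of "\<lambda>i. \<Phi> s i * H j i"] by simp
    also have "\<dots> = (\<Sum>t\<in>{1..d}. ?a t)" by (rule sum.cong) (auto simp: \<Phi>_pos)
    also have "\<dots> = (\<Sum>k\<in>{1..d-2}. (if k = 1 then ?a 1 + ?a 2 else if k = d-2 then ?a (d-1) + ?a d else ?a (k+1)))"
      by (rule split_sum[OF d4, symmetric])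
    also have "\<dots> = (\<Sum>k\<in>{1..d-2}. \<Sum>i\<in>cpos j k. s k (Inl i) * H j i)"
    proof (rule sum.cong[OF refl])
      fix k assume k: "k \<in> {1..d-2}"
      have k': "1 \<le> k" "k \<le> dg j - 2" using k unfolding d_def by auto
      have r: "rowidx 1 = 1" "rowidx 2 = 1" "rowidx (d-1) = d-2" "rowidx d = d-2" using d4 unfolding rowidx_def by auto
      have r2: "rowidx (k+1) = k" if "k \<noteq> 1" "k \<noteq> d - 2" using that k unfolding rowidx_def by auto
      show "(if k = 1 then ?a 1 + ?a 2 else if k = d-2 then ?a (d-1) + ?a d else ?a (k+1)) = (\<Sum>i\<in>cpos j k. s k (Inl i) * H j i)"
        unfolding cpos_sum[OF j k'] d_def[symmetric] using r r2 by auto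
    qed
    also have "\<dots> = (\<Sum>k\<in>{1..d-2}. - ((if k \<le> d - 3 then x k else 0) - (if 2 \<le> k then x (k-1) else 0)))"
      by (rule sum.cong[OF refl]) (simp add: rowk N_def)
    also have "\<dots> = 0" unfolding sum_negf tele_sum[OF d4] by simp
    finally have "(\<Sum>i\<in>Iset H n j. \<Phi> s i * H j i) = 0" .
    then show ?thesis unfolding local_code_def rsH \<Phi>_def by auto
  qed
  define wj where "wj g = (\<Sum>s\<in>{s\<in>?T. \<Phi> s = g}. \<pi> s)" for g
  have fib: "(\<Sum>g\<in>{g\<in>?LC. P g}. wj g) = (\<Sum>s\<in>{s\<in>?T. P (\<Phi> s)}. \<pi> s)" for P
    unfolding wj_def by (rule fiber_sum) (use finT finLCH \<Phi>_in in auto)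
  have w1: "(\<Sum>g\<in>?LC. wj g) = 1" using fib[of "\<lambda>_. True"] p1 by simp
  have wnn: "\<forall>g\<in>?LC. wj g \<ge> 0" unfolding wj_def using pn by (auto intro!: sum_nonneg)
  have wm: "F (Inl i) \<alpha> = (\<Sum>g\<in>{g\<in>?LC. g i = \<alpha>}. wj g)" if i: "i \<in> Iset H n j" and a: "\<alpha> \<noteq> 0" for i \<alpha>
  proof -
    define kk where "kk = rowidx (idx i)"
    have kk: "kk \<in> {1..N}" "i \<in> cpos j kk" using rowidx_ok[OF pos_idx(2)[OF i]] pos_idx(1)[OF i] unfolding kk_def by auto
    have kk': "1 \<le> kk" "kk \<le> dg j - 2" using kk(1) unfolding N_def d_def by auto
    have rs: "Inl i \<in> row_supp FM FC (j,kk)" using rsF[OF j kk'] kk(2) by auto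
    have "(\<Sum>g\<in>{g\<in>?LC. g i = \<alpha>}. wj g) = (\<Sum>s\<in>{s\<in>?T. \<Phi> s i = \<alpha>}. \<pi> s)" by (rule fib)
    also have "\<dots> = (\<Sum>s\<in>?T. \<pi> s * (if s kk (Inl i) = \<alpha> then 1 else 0))"
      unfolding \<Phi>_def kk_def[symmetric] using i by (simp add: sum_ind finT)
    also have "\<dots> = (\<Sum>b\<in>B kk. \<nu> kk b * (if b (Inl i) = \<alpha> then 1 else 0))"
      using pm[rule_format, OF kk(1), of "\<lambda>b. if b (Inl i) = \<alpha> then 1 else 0"] by simp
    also have "\<dots> = (\<Sum>b\<in>{b\<in>B kk. b (Inl i) = \<alpha>}. \<nu> kk b)" by (simp add: sum_ind fin)
    also have "\<dots> = F (Inl i) \<alpha>" using Sm[OF kFR[OF kk(1)] rs a] unfolding B_def \<nu>_def by simp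
    finally show ?thesis by simp
  qed
  show ?thesis using wnn w1 wm by blast
qed

lemma main_eq:
  "{(\<lambda>i \<alpha>. F (Inl i) \<alpha>) | F Z. (F, Z) \<in> polytopeQ FM FR FC} = {f. \<exists>w. (f, w) \<in> polytopeQ H {1..m} {1..n}}"
proof (rule set_eqI, rule iffI)
  fix f assume "f \<in> {f. \<exists>w. (f, w) \<in> polytopeQ H {1..m} {1..n}}"
  then obtain w where "(f, w) \<in> polytopeQ H {1..m} {1..n}" by auto
  then show "f \<in> {(\<lambda>i \<alpha>. F (Inl i) \<alpha>) | F Z. (F, Z) \<in> polytopeQ FM FR FC}" using QtoS by blast
next
  fix f assume "f \<in> {(\<lambda>i \<alpha>. F (Inl i) \<alpha>) | F Z. (F, Z) \<in> polytopeQ FM FR FC}"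
  then obtain F Z where f: "f = (\<lambda>i \<alpha>. F (Inl i) \<alpha>)" and FZ: "(F, Z) \<in> polytopeQ FM FR FC" by auto
  have "\<forall>j\<in>{1..m}. \<exists>wj. (\<forall>g\<in>local_code H {1..n} j. wj g \<ge> 0) \<and> (\<Sum>g\<in>local_code H {1..n} j. wj g) = 1 \<and>
     (\<forall>i\<in>Iset H n j. \<forall>\<alpha>. \<alpha> \<noteq> 0 \<longrightarrow> F (Inl i) \<alpha> = (\<Sum>g\<in>{g\<in>local_code H {1..n} j. g i = \<alpha>}. wj g))"
    using StoQ_j[OF FZ] by blast
  then obtain W where W: "\<forall>j\<in>{1..m}. (\<forall>g\<in>local_code H {1..n} j. W j g \<ge> 0) \<and> (\<Sum>g\<in>local_code H {1..n} j. W j g) = 1 \<and>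
     (\<forall>i\<in>Iset H n j. \<forall>\<alpha>. \<alpha> \<noteq> 0 \<longrightarrow> F (Inl i) \<alpha> = (\<Sum>g\<in>{g\<in>local_code H {1..n} j. g i = \<alpha>}. W j g))"
    by (rule bchoice[elim_format]) blast
  define w where "w j g = (if j \<in> {1..m} \<and> g \<in> local_code H {1..n} j then W j g else 0)" for j g
  have F0: "\<And>c \<alpha>. c \<notin> FC \<or> \<alpha> = 0 \<Longrightarrow> F c \<alpha> = 0" using FZ unfolding polytopeQ_def by blast
  have c1: "\<forall>i \<alpha>. (i \<notin> {1..n} \<or> \<alpha> = 0) \<longrightarrow> f i \<alpha> = 0" unfolding f using F0 Inl_FC by blast
  have c2: "\<forall>\<rho> g. (\<rho> \<notin> {1..m} \<or> g \<notin> local_code H {1..n} \<rho>) \<longrightarrow> w \<rho> g = 0" unfolding w_def by auto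
  have c3: "\<forall>\<rho>\<in>{1..m}. (\<forall>g\<in>local_code H {1..n} \<rho>. w \<rho> g \<ge> 0) \<and> (\<Sum>g\<in>local_code H {1..n} \<rho>. w \<rho> g) = 1"
    using W unfolding w_def by auto
  have c4: "\<forall>\<rho>\<in>{1..m}. \<forall>i\<in>row_supp H {1..n} \<rho>. \<forall>\<alpha>. \<alpha> \<noteq> 0 \<longrightarrow>
          f i \<alpha> = (\<Sum>g\<in>{g \<in> local_code H {1..n} \<rho>. g i = \<alpha>}. w \<rho> g)"
  proof (intro ballI allI impI)
    fix j i \<alpha> assume j: "j \<in> {1..m}" and i: "i \<in> row_supp H {1..n} j" and a: "(\<alpha>::'r) \<noteq> 0"
    have "(\<Sum>g\<in>{g \<in> local_code H {1..n} j. g i = \<alpha>}. w j g) = (\<Sum>g\<in>{g \<in> local_code H {1..n} j. g i = \<alpha>}. W j g)"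
      unfolding w_def using j by (intro sum.cong refl) auto
    then show "f i \<alpha> = (\<Sum>g\<in>{g \<in> local_code H {1..n} j. g i = \<alpha>}. w j g)"
      using W j i a unfolding f rsH by auto
  qed
  have "(f, w) \<in> polytopeQ H {1..m} {1..n}" unfolding polytopeQ_def using c1 c2 c3 c4 by blast
  then show "f \<in> {f. \<exists>w. (f, w) \<in> polytopeQ H {1..m} {1..n}}" by blast
qed

end

theorem theorem6:
  fixes H :: "nat \<Rightarrow> nat \<Rightarrow> 'r::{ring_1, finite}"
    and m n :: nat
    and pos :: "nat \<Rightarrow> nat \<Rightarrow> nat"
  assumes deg4: "\<forall>j\<in>{1..m}. deg H n j \<ge> 4"
    and order: "\<forall>j\<in>{1..m}. bij_betw (pos j) {1..deg H n j} (Iset H n j)"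
  shows "{(\<lambda>i \<alpha>. F (Inl i) \<alpha>) | F Z. (F, Z) \<in> polytopeQ (F_mat H m n pos) (F_rows H m n) (F_cols H m n)}
           = {f. \<exists>w. (f, w) \<in> polytopeQ H {1..m} {1..n}}
       \<and> (\<forall>\<Lambda> :: nat \<Rightarrow> 'r \<Rightarrow> real.
           {(\<Sum>i\<in>{1..n}. \<Sum>\<alpha>\<in>UNIV - {0}. \<Lambda> i \<alpha> * F (Inl i) \<alpha>) | F Z.
               (F, Z) \<in> polytopeQ (F_mat H m n pos) (F_rows H m n) (F_cols H m n)}
         = {(\<Sum>i\<in>{1..n}. \<Sum>\<alpha>\<in>UNIV - {0}. \<Lambda> i \<alpha> * f i \<alpha>) | f w.
               (f, w) \<in> polytopeQ H {1..m} {1..n}})"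
proof -
  interpret thm6 H m n pos using deg4 order by unfold_locales
  have eq: "{(\<lambda>i \<alpha>. F (Inl i) \<alpha>) | F Z. (F, Z) \<in> polytopeQ (F_mat H m n pos) (F_rows H m n) (F_cols H m n)}
           = {f. \<exists>w. (f, w) \<in> polytopeQ H {1..m} {1..n}}" by (rule main_eq)
  have "{(\<Sum>i\<in>{1..n}. \<Sum>\<alpha>\<in>UNIV - {0}. \<Lambda> i \<alpha> * F (Inl i) \<alpha>) | F Z.
               (F, Z) \<in> polytopeQ (F_mat H m n pos) (F_rows H m n) (F_cols H m n)}
         = {(\<Sum>i\<in>{1..n}. \<Sum>\<alpha>\<in>UNIV - {0}. \<Lambda> i \<alpha> * f i \<alpha>) | f w.
               (f, w) \<in> polytopeQ H {1..m} {1..n}}" for \<Lambda> :: "nat \<Rightarrow> 'r \<Rightarrow> real"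
  proof -
    let ?P = "\<lambda>f::nat \<Rightarrow> 'r \<Rightarrow> real. (\<Sum>i\<in>{1..n}. \<Sum>\<alpha>\<in>UNIV - {0}. \<Lambda> i \<alpha> * f i \<alpha>)"
    have "{(\<Sum>i\<in>{1..n}. \<Sum>\<alpha>\<in>UNIV - {0}. \<Lambda> i \<alpha> * F (Inl i) \<alpha>) | F Z.
               (F, Z) \<in> polytopeQ (F_mat H m n pos) (F_rows H m n) (F_cols H m n)}
          = ?P ` {(\<lambda>i \<alpha>. F (Inl i) \<alpha>) | F Z. (F, Z) \<in> polytopeQ (F_mat H m n pos) (F_rows H m n) (F_cols H m n)}"
      by (auto simp: image_def)
    also have "\<dots> = ?P ` {f. \<exists>w. (f, w) \<in> polytopeQ H {1..m} {1..n}}" unfolding eq ..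
    also have "\<dots> = {(\<Sum>i\<in>{1..n}. \<Sum>\<alpha>\<in>UNIV - {0}. \<Lambda> i \<alpha> * f i \<alpha>) | f w.
               (f, w) \<in> polytopeQ H {1..m} {1..n}}" by blast
    finally show ?thesis .
  qed
  then show ?thesis using eq by blast
qed


end
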